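(* Let $\{A_n\}_{n\geqslant 1}$ be i.i.d. nonnegative random variables with Laplace–Stieltjes transform $\alpha(s)=\mathbb{E}[e^{-sA_1}]$, and let $\{B_n\}_{n\geqslant 1}$ be i.i.d. Erlang distributed with $N$ phases and rate $\mu>0$, independent of $\{A_n\}$. Let $W_1=w\geqslant 0$ and $W_{n+1}=\max\{0,\,B_{n+1}-A_n-W_n\}$ for $n\geqslant 1$. Define, for $i,j\in\{1,\dots,N\}$, $$p_{ij}=\frac{(-\mu)^{N-j}}{2^i}\sum_{\ell=0}^{N-j}\binom{i+\ell-1}{i-1}\frac{\alpha^{(N-j-\ell)}(\mu)}{(N-j-\ell)!}\left(-\frac{1}{2\mu}\right)^{\ell},\qquad p_{0j}=\frac{(-\mu)^{N-j}}{(N-j)!}\alpha^{(N-j)}(\mu),$$ and $p_{i0}=1-\sum_{j=1}^N p_{ij}$ for $i\in\{0,\dots,N\}$. Define $$\varpi_{2,j}=(-\mu)^{N-j}e^{-\mu w}\sum_{\ell=0}^{N-j}\frac{(-w)^{\ell}}{\ell!}\frac{\alpha^{(N-j-\ell)}(\mu)}{(N-j-\ell)!},\quad j=1,\dots,N,\qquad \varpi_{2,0}=1-\sum_{j=1}^N\varpi_{2,j},$$ and recursively $\varpi_{n,j}=\sum_{i=0}^N\varpi_{n-1,i}\,p_{ij}$ for $n\geqslant 3$, $j\in\{0,\dots,N\}$ (i.e. $\varpi_n^{\mathrm T}=\varpi_2^{\mathrm T}\mathbf P^{n-2}$ with $\mathbf P=(p_{ij})_{i,j=0}^N$). Then for every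 $n\geqslant 2$, $W_n$ has a mixed-Erlang distribution: $$\mathbb{P}[W_n\leqslant x]=\sum_{i=0}^N\varpi_{n,i}\,G_i(x),\qquad x\geqslant 0.$$
   Context: $\alpha^{(m)}$ denotes the $m$-th derivative of $\alpha$. $G_i$ denotes the distribution function of the Erlang distribution with $i$ phases and rate $\mu$ for $i\geqslant 1$, and $G_0(x)=1$ for $x\geqslant0$ (point mass at $0$). The numbers $\varpi_{n,i}$ equal $\mathbb{P}[F_n=i]$, where $F_n$ is the number of remaining exponential preparation phases at the moment the $n$-th waiting time starts; $(F_n)$ is a Markov chain with transition probabilities $p_{ij}$. *)

theory Defs
  imports "HOL-Probability.Probability"
begin

definition p_pos :: "(real \<Rightarrow> real) \<Rightarrow> nat \<Rightarrow> real \<Rightarrow> nat \<Rightarrow> nat \<Rightarrow> real" where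
  "p_pos \<alpha> N \<mu> i j =
     (if i = 0 then (-\<mu>) ^ (N - j) / fact (N - j) * (deriv ^^ (N - j)) \<alpha> \<mu>
      else (-\<mu>) ^ (N - j) / 2 ^ i *
        (\<Sum>l = 0..N - j. real ((i + l - 1) choose (i - 1)) *
            ((deriv ^^ (N - j - l)) \<alpha> \<mu> / fact (N - j - l)) * (- 1 / (2 * \<mu>)) ^ l))"

definition pmat :: "(real \<Rightarrow> real) \<Rightarrow> nat \<Rightarrow> real \<Rightarrow> nat \<Rightarrow> nat \<Rightarrow> real" where
  "pmat \<alpha> N \<mu> i j =
     (if j = 0 then 1 - (\<Sum>j' = 1..N. p_pos \<alpha> N \<mu> i j') else p_pos \<alpha> N \<mu> i j)"

definition varpi2_pos :: "(real \<Rightarrow> real) \<Rightarrow> nat \<Rightarrow> real \<Rightarrow> real \<Rightarrow> nat \<Rightarrow> real" where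
  "varpi2_pos \<alpha> N \<mu> w j =
     (-\<mu>) ^ (N - j) * exp (- \<mu> * w) *
       (\<Sum>l = 0..N - j. ((- w) ^ l / fact l) * ((deriv ^^ (N - j - l)) \<alpha> \<mu> / fact (N - j - l)))"

definition varpi2 :: "(real \<Rightarrow> real) \<Rightarrow> nat \<Rightarrow> real \<Rightarrow> real \<Rightarrow> nat \<Rightarrow> real" where
  "varpi2 \<alpha> N \<mu> w j =
     (if j = 0 then 1 - (\<Sum>j' = 1..N. varpi2_pos \<alpha> N \<mu> w j') else varpi2_pos \<alpha> N \<mu> w j)"

text \<open>varpi_aux k j = varpi_{k+2, j}\<close>
fun varpi_aux :: "(real \<Rightarrow> real) \<Rightarrow> nat \<Rightarrow> real \<Rightarrow> real \<Rightarrow> nat \<Rightarrow> nat \<Rightarrow> real" where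
  "varpi_aux \<alpha> N \<mu> w 0 j = varpi2 \<alpha> N \<mu> w j"
| "varpi_aux \<alpha> N \<mu> w (Suc k) j = (\<Sum>i = 0..N. varpi_aux \<alpha> N \<mu> w k i * pmat \<alpha> N \<mu> i j)"

definition varpi :: "(real \<Rightarrow> real) \<Rightarrow> nat \<Rightarrow> real \<Rightarrow> real \<Rightarrow> nat \<Rightarrow> nat \<Rightarrow> real" where
  "varpi \<alpha> N \<mu> w n j = varpi_aux \<alpha> N \<mu> w (n - 2) j"

text \<open>G_i: Erlang CDF with i phases and rate mu (i >= 1); G_0 is the point mass at 0.
  Library erlang_CDF k has k+1 phases.\<close>
definition G :: "real \<Rightarrow> nat \<Rightarrow> real \<Rightarrow> real" where
  "G \<mu> i x = (if i = 0 then (if 0 \<le> x then 1 else 0) else erlang_CDF (i - 1) \<mu> x)"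

end

theory Submission
  imports Defs
begin


lemma pow_div_fact_le_exp:
  fixes x :: real assumes "0 \<le> x"
  shows "x ^ l / fact l \<le> exp x"
proof -
  obtain t where t: "\<bar>t\<bar> \<le> \<bar>x\<bar>" "exp x = (\<Sum>m<Suc l. (x ^ m) / fact m) + (exp t / fact (Suc l)) * x ^ Suc l"
    using Maclaurin_exp_le[of x "Suc l"] by blast
  have "x ^ l / fact l \<le> (\<Sum>m<Suc l. (x ^ m) / fact m)"
    using assms by (intro member_le_sum) auto
  also have "\<dots> \<le> exp x" using t assms by simp
  finally show ?thesis .
qed

lemma pow_exp_bound:
  fixes z \<mu> :: real assumes "0 \<le> z" "0 < \<mu>"
  shows "z ^ l * exp (- \<mu> * z) \<le> fact l / \<mu> ^ l"
proof -
  have "(\<mu> * z) ^ l / fact l \<le> exp (\<mu> * z)"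
    using assms by (intro pow_div_fact_le_exp) auto
  hence "\<mu>^l * z ^ l \<le> fact l * exp (\<mu> * z)"
    by (simp add: divide_le_eq power_mult_distrib mult.commute)
  hence "\<mu>^l * (z ^ l * exp (- \<mu> * z)) \<le> fact l * (exp (\<mu> * z) * exp (- \<mu> * z))"
    by (smt (verit, best) exp_gt_zero mult.assoc mult_le_cancel_right_pos)
  hence "\<mu>^l * (z ^ l * exp (- \<mu> * z)) \<le> fact l"
    by (simp add: exp_minus)
  thus ?thesis using assms by (simp add: le_divide_eq mult.commute)
qed

lemma erlang_has_integral:
  assumes "0 < l"
  shows "has_bochner_integral lborel (erlang_density k l) 1"
proof (rule has_bochner_integral_nn_integral)
  show "(\<integral>\<^sup>+ x. ennreal (erlang_density k l x) \<partial>lborel) = ennreal 1"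
    using nn_integral_erlang_ith_moment[OF assms, of k 0] by simp
  show "erlang_density k l \<in> borel_measurable lborel" by simp
  show "AE x in lborel. 0 \<le> erlang_density k l x" using assms by simp
qed simp

lemma erlang_integrable[intro]: "0 < l \<Longrightarrow> integrable lborel (erlang_density k l)"
  using erlang_has_integral[of l k] by (simp add: has_bochner_integral_iff)

lemma erlang_integral[simp]: "0 < l \<Longrightarrow> integral\<^sup>L lborel (erlang_density k l) = 1"
  using erlang_has_integral[of l k] by (simp add: has_bochner_integral_iff)

lemma erlang_integrable_bdd:
  fixes \<psi> :: "real \<Rightarrow> real"
  assumes "0 < l" and [measurable]: "\<psi> \<in> borel_measurable borel" and C: "\<And>y. \<bar>\<psi> y\<bar> \<le> C"
  shows "integrable lborel (\<lambda>y. erlang_density k l y * \<psi> y)"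
proof (rule Bochner_Integration.integrable_bound[where f="\<lambda>y. C * erlang_density k l y"])
  show "integrable lborel (\<lambda>y. C * erlang_density k l y)"
    using assms by (intro integrable_mult_right erlang_integrable)
  show "AE x in lborel. norm (erlang_density k l x * \<psi> x) \<le> norm (C * erlang_density k l x)"
  proof (intro AE_I2)
    fix x
    have e: "0 \<le> erlang_density k l x" using assms(1) by simp
    have "\<bar>erlang_density k l x * \<psi> x\<bar> = erlang_density k l x * \<bar>\<psi> x\<bar>" using e by (simp add: abs_mult)
    also have "\<dots> \<le> erlang_density k l x * C" using e C by (intro mult_left_mono) auto
    also have "\<dots> \<le> \<bar>C * erlang_density k l x\<bar>" by (simp add: mult.commute)
    finally show "norm (erlang_density k l x * \<psi> x) \<le> norm (C * erlang_density k l x)" by simp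
  qed
qed simp


definition qq :: "nat \<Rightarrow> real \<Rightarrow> nat \<Rightarrow> real \<Rightarrow> real" where
  "qq m \<mu> k t = exp (- \<mu> * t) * (\<mu> * t) ^ (m - k) / fact (m - k)"

lemma erl_shift_expand:
  fixes t y \<mu> :: real assumes "0 \<le> t" "0 \<le> y"
  shows "erlang_density m \<mu> (t + y) = (\<Sum>k\<le>m. qq m \<mu> k t * erlang_density k \<mu> y)"
proof -
  have "erlang_density m \<mu> (t + y) = \<mu>^(Suc m) * (y + t)^m * exp (- \<mu> * (t + y)) / fact m"
    using assms by (simp add: erlang_density_def add.commute)
  also have "\<dots> = (\<Sum>k\<le>m. \<mu>^(Suc m) * (real (m choose k) * y^k * t^(m-k)) * exp (- \<mu> * (t + y)) / fact m)"
    by (simp add: binomial_ring sum_distrib_left sum_distrib_right sum_divide_distrib)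
  also have "\<dots> = (\<Sum>k\<le>m. qq m \<mu> k t * erlang_density k \<mu> y)"
  proof (rule sum.cong[OF refl])
    fix k assume "k \<in> {..m}"
    hence km: "k \<le> m" by simp
    have c: "real (m choose k) = fact m / (fact k * fact (m - k))"
      using binomial_fact[OF km] by simp
    have p: "\<mu>^(Suc m) = \<mu>^(m-k) * \<mu>^(Suc k)"
      using km by (simp add: power_add[symmetric])
    have e: "exp (- \<mu> * (t + y)) = exp (- \<mu> * t) * exp (- \<mu> * y)"
      by (simp add: distrib_left exp_add[symmetric])
    show "\<mu>^(Suc m) * (real (m choose k) * y^k * t^(m-k)) * exp (- \<mu> * (t + y)) / fact m
        = qq m \<mu> k t * erlang_density k \<mu> y"
      using assms unfolding c p e
      by (simp add: qq_def erlang_density_def power_mult_distrib field_simps)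
  qed
  finally show ?thesis .
qed



lemma shift_integral:
  fixes \<phi> :: "real \<Rightarrow> real"
  assumes \<mu>: "0 < \<mu>" and t: "0 \<le> t" and [measurable]: "\<phi> \<in> borel_measurable borel"
    and C: "\<And>y. \<bar>\<phi> y\<bar> \<le> C"
  shows "(LINT b|lborel. indicator {t..} b * erlang_density m \<mu> b * \<phi> (b - t))
       = (\<Sum>k\<le>m. qq m \<mu> k t * (LINT y|lborel. erlang_density k \<mu> y * \<phi> y))"
proof -
  have "(LINT b|lborel. indicator {t..} b * erlang_density m \<mu> b * \<phi> (b - t))
      = \<bar>1\<bar> *\<^sub>R (LINT y|lborel. indicator {t..} (t + 1 * y) * erlang_density m \<mu> (t + 1 * y) * \<phi> (t + 1 * y - t))"
    by (rule lborel_integral_real_affine) simp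
  also have "\<dots> = (LINT y|lborel. (\<Sum>k\<le>m. qq m \<mu> k t * (erlang_density k \<mu> y * \<phi> y)))"
  proof -
    have "indicator {t..} (t + 1 * y) * erlang_density m \<mu> (t + 1 * y) * \<phi> (t + 1 * y - t)
        = (\<Sum>k\<le>m. qq m \<mu> k t * (erlang_density k \<mu> y * \<phi> y))" for y
    proof (cases "0 \<le> y")
      case True
      then show ?thesis using erl_shift_expand[OF t True, of m \<mu>]
        by (simp add: sum_distrib_right mult.assoc)
    next
      case False
      then show ?thesis by (simp add: erlang_density_def indicator_def)
    qed
    then show ?thesis by simp
  qed
  also have "\<dots> = (\<Sum>k\<le>m. (LINT y|lborel. qq m \<mu> k t * (erlang_density k \<mu> y * \<phi> y)))"
  proof (rule Bochner_Integration.integral_sum)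
    fix k show "integrable lborel (\<lambda>y. qq m \<mu> k t * (erlang_density k \<mu> y * \<phi> y))"
      by (rule integrable_mult_right, rule erlang_integrable_bdd[OF \<mu> _ C]) simp
  qed
  also have "\<dots> = (\<Sum>k\<le>m. qq m \<mu> k t * (LINT y|lborel. erlang_density k \<mu> y * \<phi> y))"
    by simp
  finally show ?thesis .
qed

lemma memoryless:
  fixes \<psi> :: "real \<Rightarrow> real"
  assumes \<mu>: "0 < \<mu>" and t: "0 \<le> t" and [measurable]: "\<psi> \<in> borel_measurable borel"
    and C: "\<And>y. \<bar>\<psi> y\<bar> \<le> C"
  shows "(LINT b|lborel. erlang_density m \<mu> b * \<psi> (max 0 (b - t)))
       = (\<Sum>k\<le>m. qq m \<mu> k t * (LINT y|lborel. erlang_density k \<mu> y * \<psi> y))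
         + (1 - (\<Sum>k\<le>m. qq m \<mu> k t)) * \<psi> 0"
proof -
  have C1: "\<And>y. \<bar>(\<lambda>_. 1::real) y\<bar> \<le> 1" by simp
  have i1: "integrable lborel (\<lambda>b. indicator {t..} b * erlang_density m \<mu> b * \<psi> (b - t))"
  proof (rule Bochner_Integration.integrable_bound[where f="\<lambda>b. C * erlang_density m \<mu> b"])
    show "integrable lborel (\<lambda>b. C * erlang_density m \<mu> b)" using \<mu> by auto
    show "AE x in lborel. norm (indicator {t..} x * erlang_density m \<mu> x * \<psi> (x - t)) \<le> norm (C * erlang_density m \<mu> x)"
    proof (intro AE_I2)
      fix x
      have e: "0 \<le> erlang_density m \<mu> x" using \<mu> by simp
      have "\<bar>indicator {t..} x * erlang_density m \<mu> x * \<psi> (x - t)\<bar> \<le> erlang_density m \<mu> x * \<bar>\<psi> (x - t)\<bar>"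
        using e by (auto simp: indicator_def abs_mult)
      also have "\<dots> \<le> erlang_density m \<mu> x * C" using e C by (intro mult_left_mono) auto
      also have "\<dots> \<le> \<bar>C * erlang_density m \<mu> x\<bar>" by (simp add: mult.commute)
      finally show "norm (indicator {t..} x * erlang_density m \<mu> x * \<psi> (x - t)) \<le> norm (C * erlang_density m \<mu> x)" by simp
    qed
  qed simp
  have i2: "integrable lborel (\<lambda>b. indicator {t..} b * erlang_density m \<mu> b)"
  proof (rule Bochner_Integration.integrable_bound[where f="\<lambda>b. erlang_density m \<mu> b"])
    show "integrable lborel (\<lambda>b. erlang_density m \<mu> b)" using \<mu> by auto
    show "AE x in lborel. norm (indicator {t..} x * erlang_density m \<mu> x) \<le> norm (erlang_density m \<mu> x)"
      using \<mu> by (intro AE_I2) (auto simp: indicator_def)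
  qed simp
  have pw: "erlang_density m \<mu> b * \<psi> (max 0 (b - t))
      = indicator {t..} b * erlang_density m \<mu> b * \<psi> (b - t)
        + \<psi> 0 * (erlang_density m \<mu> b - indicator {t..} b * erlang_density m \<mu> b * 1)" for b
    by (cases "t \<le> b") (auto simp: indicator_def max_def)
  have "(LINT b|lborel. erlang_density m \<mu> b * \<psi> (max 0 (b - t)))
      = (LINT b|lborel. indicator {t..} b * erlang_density m \<mu> b * \<psi> (b - t))
        + \<psi> 0 * ((LINT b|lborel. erlang_density m \<mu> b) - (LINT b|lborel. indicator {t..} b * erlang_density m \<mu> b * (\<lambda>_. 1) (b - t)))"
  proof -
    have i3: "integrable lborel (\<lambda>b. erlang_density m \<mu> b - indicator {t..} b * erlang_density m \<mu> b)"
      by (rule Bochner_Integration.integrable_diff[OF erlang_integrable[OF \<mu>] i2])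
    show ?thesis
      unfolding pw using i1 i2 i3 \<mu> by (simp add: Bochner_Integration.integral_diff[OF erlang_integrable[OF \<mu>] i2] Bochner_Integration.integral_add integrable_mult_right)
  qed
  also have "\<dots> = (\<Sum>k\<le>m. qq m \<mu> k t * (LINT y|lborel. erlang_density k \<mu> y * \<psi> y))
      + \<psi> 0 * (1 - (\<Sum>k\<le>m. qq m \<mu> k t * (LINT y|lborel. erlang_density k \<mu> y * 1)))"
  proof -
    have s1: "(LINT b|lborel. indicator {t..} b * erlang_density m \<mu> b * (\<lambda>_. 1) (b - t)) = (\<Sum>k\<le>m. qq m \<mu> k t)"
      using shift_integral[OF \<mu> t _ C1, of m] \<mu> by simp
    show ?thesis unfolding shift_integral[OF \<mu> t assms(3) C] s1 using \<mu> by simp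
  qed
  also have "\<dots> = (\<Sum>k\<le>m. qq m \<mu> k t * (LINT y|lborel. erlang_density k \<mu> y * \<psi> y))
         + (1 - (\<Sum>k\<le>m. qq m \<mu> k t)) * \<psi> 0"
    using \<mu> by simp
  finally show ?thesis .
qed



lemma exp_taylor2: fixes z :: real shows "\<bar>exp z - 1 - z\<bar> \<le> exp \<bar>z\<bar> * z^2 / 2"
proof -
  obtain t where t: "\<bar>t\<bar> \<le> \<bar>z\<bar>" "exp z = (\<Sum>m<2. (z ^ m) / fact m) + (exp t / fact 2) * z ^ 2"
    using Maclaurin_exp_le[of z 2] by blast
  have "exp z - 1 - z = exp t / 2 * z^2" using t(2) by (simp add: numeral_2_eq_2)
  moreover have "0 \<le> exp t / 2 * z^2" by simp
  ultimately have "\<bar>exp z - 1 - z\<bar> = exp t * z^2 / 2" by (metis abs_of_nonneg times_divide_eq_left mult.commute)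
  also have "\<dots> \<le> exp \<bar>z\<bar> * z^2 / 2" using t(1) by (intro divide_right_mono mult_right_mono) auto
  finally show ?thesis .
qed

lemma pw_bound:
  fixes a s h :: real
  assumes a: "0 \<le> a" and s: "0 < s" and h: "h \<noteq> 0" "\<bar>h\<bar> \<le> s/2"
  shows "\<bar>(-a)^k * exp(-s*a) * ((exp(-h*a) - 1)/h + a)\<bar> \<le> \<bar>h\<bar> * (fact (k+2) / (s/2)^(k+2)) / 2"
proof -
  have eq: "(exp(-h*a) - 1)/h + a = (exp(-h*a) - 1 - (-h*a))/h" using h by (simp add: field_simps)
  have t: "\<bar>exp(-h*a) - 1 - (-h*a)\<bar> \<le> exp (\<bar>h\<bar> * a) * (h*a)^2 / 2"
    using exp_taylor2[of "-h*a"] a by (simp add: abs_mult)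
  have "\<bar>(-a)^k * exp(-s*a) * ((exp(-h*a) - 1)/h + a)\<bar>
      = a^k * exp(-s*a) * (\<bar>exp(-h*a) - 1 - (-h*a)\<bar> / \<bar>h\<bar>)"
    unfolding eq using a by (simp add: abs_mult power_abs)
  also have "\<dots> \<le> a^k * exp(-s*a) * (exp (\<bar>h\<bar> * a) * (h*a)^2 / 2 / \<bar>h\<bar>)"
    using t a h by (intro mult_left_mono divide_right_mono) auto
  also have "\<dots> = \<bar>h\<bar> / 2 * (a^(k+2) * (exp(-s*a) * exp (\<bar>h\<bar> * a)))"
    using h by (simp add: power2_eq_square field_simps power_add abs_mult_self_eq)
  also have "\<dots> \<le> \<bar>h\<bar> / 2 * (a^(k+2) * exp(-(s/2)*a))"
  proof -
    have "exp(-s*a) * exp (\<bar>h\<bar> * a) = exp (-s*a + \<bar>h\<bar> * a)" by (rule exp_add[symmetric])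
    also have "\<dots> \<le> exp(-(s/2)*a)" using h a mult_right_mono[OF h(2) a] by (intro exp_mono) (simp add: algebra_simps)
    finally show ?thesis using a by (intro mult_left_mono) auto
  qed
  also have "\<dots> \<le> \<bar>h\<bar> / 2 * (fact (k+2) / (s/2)^(k+2))"
    using pow_exp_bound[of a "s/2" "k+2"] a s by (intro mult_left_mono) auto
  finally show ?thesis by simp
qed

context prob_space begin

lemma laplace_integrable:
  fixes X :: "'a \<Rightarrow> real" and s :: real
  assumes [measurable]: "X \<in> borel_measurable M" and X0: "AE x in M. 0 \<le> X x" and s: "0 < s"
  shows "integrable M (\<lambda>x. (- X x)^k * exp(-s * X x))"
proof (rule integrable_const_bound[where B="fact k / s^k"])
  show "AE x in M. norm ((- X x)^k * exp(-s * X x)) \<le> fact k / s^k"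
    using X0
  proof eventually_elim
    case (elim x)
    then show ?case using pow_exp_bound[of "X x" s k] s by (simp add: abs_mult power_abs)
  qed
qed simp

lemma laplace_deriv:
  fixes X :: "'a \<Rightarrow> real" and s :: real
  assumes X[measurable]: "X \<in> borel_measurable M" and X0: "AE x in M. 0 \<le> X x" and s: "0 < s"
  shows "((\<lambda>s. \<integral>x. (- X x)^k * exp(-s * X x) \<partial>M) has_field_derivative
          (\<integral>x. (- X x)^(Suc k) * exp(-s * X x) \<partial>M)) (at s)"
proof -
  define L where "L = (\<lambda>k s. \<integral>x. (- X x)^k * exp(-s * X x) \<partial>M)"
  define K where "K = fact (k+2) / (s/2)^(k+2)"
  have bnd: "\<bar>(L k y - L k s)/(y - s) - L (Suc k) s\<bar> \<le> \<bar>y - s\<bar> * K / 2"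
    if y: "y \<noteq> s" "\<bar>y - s\<bar> < s/2" for y
  proof -
    define h where "h = y - s"
    have h: "h \<noteq> 0" "\<bar>h\<bar> \<le> s/2" using y by (auto simp: h_def)
    have ypos: "0 < y" using y(2) s abs_ge_minus_self[of "y - s"] by linarith
    define g where "g = (\<lambda>x. (- X x)^k * exp(-s * X x) * ((exp(-h * X x) - 1)/h + X x))"
    have ig1: "integrable M (\<lambda>x. (- X x)^k * exp(-y * X x))" by (rule laplace_integrable[OF X X0 ypos])
    have ig2: "integrable M (\<lambda>x. (- X x)^k * exp(-s * X x))" by (rule laplace_integrable[OF X X0 s])
    have ig3: "integrable M (\<lambda>x. (- X x)^(Suc k) * exp(-s * X x))" by (rule laplace_integrable[OF X X0 s])
    have geq: "g x = ((- X x)^k * exp(-y * X x) - (- X x)^k * exp(-s * X x)) / h - (- X x)^(Suc k) * exp(-s * X x)" for x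
    proof -
      have "exp(-y * X x) = exp(-s * X x) * exp(-h * X x)"
        by (simp add: h_def exp_add[symmetric] algebra_simps)
      thus ?thesis using h by (simp add: g_def field_simps)
    qed
    have geq': "g = (\<lambda>x. ((- X x)^k * exp(-y * X x) - (- X x)^k * exp(-s * X x)) / h - (- X x)^(Suc k) * exp(-s * X x))"
      by (rule ext) (rule geq)
    have i12: "integrable M (\<lambda>x. ((- X x)^k * exp(-y * X x) - (- X x)^k * exp(-s * X x)) / h)"
      by (intro integrable_divide Bochner_Integration.integrable_diff ig1 ig2)
    have "(\<integral>x. g x \<partial>M) = (\<integral>x. ((- X x)^k * exp(-y * X x) - (- X x)^k * exp(-s * X x)) / h - (- X x)^(Suc k) * exp(-s * X x) \<partial>M)"
      by (simp only: geq')
    also have "\<dots> = ((\<integral>x. (- X x)^k * exp(-y * X x) \<partial>M) - (\<integral>x. (- X x)^k * exp(-s * X x) \<partial>M)) / h - (\<integral>x. (- X x)^(Suc k) * exp(-s * X x) \<partial>M)"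
      by (simp only: Bochner_Integration.integral_diff[OF i12 ig3] integral_divide_zero
          Bochner_Integration.integral_diff[OF ig1 ig2])
    also have "\<dots> = (L k y - L k s)/(y - s) - L (Suc k) s" by (simp only: L_def h_def)
    finally have "(L k y - L k s)/(y - s) - L (Suc k) s = (\<integral>x. g x \<partial>M)" by simp
    moreover have "\<bar>\<integral>x. g x \<partial>M\<bar> \<le> \<bar>h\<bar> * K / 2"
    proof -
      have ig: "integrable M g" unfolding geq' using ig1 ig2 ig3
        by (intro Bochner_Integration.integrable_diff integrable_divide) auto
      have "\<bar>\<integral>x. g x \<partial>M\<bar> \<le> (\<integral>x. \<bar>g x\<bar> \<partial>M)" by simp
      also have "\<dots> \<le> \<bar>h\<bar> * K / 2"
      proof (rule integral_le_const)
        show "integrable M (\<lambda>x. \<bar>g x\<bar>)" using ig by auto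
        show "AE x in M. \<bar>g x\<bar> \<le> \<bar>h\<bar> * K / 2"
          using X0
        proof eventually_elim
          case (elim x)
          show ?case unfolding g_def K_def using pw_bound[OF elim s h, of k] by simp
        qed
      qed
      finally show ?thesis .
    qed
    ultimately show ?thesis by (simp add: h_def)
  qed
  have "((\<lambda>y. (L k y - L k s)/(y - s) - L (Suc k) s) \<longlongrightarrow> 0) (at s)"
  proof (rule Lim_null_comparison)
    show "\<forall>\<^sub>F y in at s. norm ((L k y - L k s)/(y - s) - L (Suc k) s) \<le> \<bar>y - s\<bar> * K / 2"
    proof -
      have "\<forall>y\<in>UNIV. y \<noteq> s \<and> dist y s < s/2 \<longrightarrow> norm ((L k y - L k s)/(y - s) - L (Suc k) s) \<le> \<bar>y - s\<bar> * K / 2"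
        using bnd by (metis dist_real_def real_norm_def)
      moreover have "s/2 > 0" using s by simp
      ultimately show ?thesis unfolding eventually_at by blast
    qed
    show "((\<lambda>y. \<bar>y - s\<bar> * K / 2) \<longlongrightarrow> 0) (at s)"
    proof -
      have "((\<lambda>y. \<bar>y - s\<bar> * K / 2) \<longlongrightarrow> \<bar>s - s\<bar> * K / 2) (at s)"
        by (intro tendsto_intros) simp
      thus ?thesis by simp
    qed
  qed
  hence "((\<lambda>y. (L k y - L k s)/(y - s)) \<longlongrightarrow> L (Suc k) s) (at s)"
    by (rule LIM_zero_cancel)
  thus ?thesis unfolding has_field_derivative_iff L_def .
qed

lemma laplace_deriv_iter:
  fixes X :: "'a \<Rightarrow> real" and s :: real
  assumes X[measurable]: "X \<in> borel_measurable M" and X0: "AE x in M. 0 \<le> X x" and s: "0 < s"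
  shows "(deriv ^^ k) (\<lambda>s. \<integral>x. exp(-s * X x) \<partial>M) s = (\<integral>x. (- X x)^k * exp(-s * X x) \<partial>M)"
  using s
proof (induction k arbitrary: s)
  case 0
  then show ?case by simp
next
  case (Suc k)
  have ev: "eventually (\<lambda>t. (deriv ^^ k) (\<lambda>s. \<integral>x. exp(-s * X x) \<partial>M) t = (\<integral>x. (- X x)^k * exp(-t * X x) \<partial>M)) (nhds s)"
  proof -
    have "eventually (\<lambda>t. t \<in> {0<..}) (nhds s)"
      by (rule eventually_nhds_in_open) (auto simp: Suc.prems)
    then show ?thesis by (rule eventually_mono) (rule Suc.IH, simp)
  qed
  have "(deriv ^^ Suc k) (\<lambda>s. \<integral>x. exp(-s * X x) \<partial>M) s = deriv ((deriv ^^ k) (\<lambda>s. \<integral>x. exp(-s * X x) \<partial>M)) s"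
    by simp
  also have "\<dots> = deriv (\<lambda>t. \<integral>x. (- X x)^k * exp(-t * X x) \<partial>M) s"
    by (rule deriv_cong_ev[OF ev refl])
  also have "\<dots> = (\<integral>x. (- X x)^(Suc k) * exp(-s * X x) \<partial>M)"
    by (rule DERIV_imp_deriv[OF laplace_deriv[OF X X0 Suc.prems]])
  finally show ?case .
qed

end



definition Emix :: "real \<Rightarrow> nat \<Rightarrow> (real \<Rightarrow> real) \<Rightarrow> real" where
  "Emix \<mu> i \<psi> = (if i = 0 then \<psi> 0 else LINT y|lborel. erlang_density (i - 1) \<mu> y * \<psi> y)"

definition psiL :: "real \<Rightarrow> nat \<Rightarrow> real \<Rightarrow> real" where
  "psiL \<mu> l y = (max 0 y)^l * exp (- \<mu> * max 0 y)"

definition cmom :: "real \<Rightarrow> nat \<Rightarrow> nat \<Rightarrow> real" where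
  "cmom \<mu> i l = (if i = 0 then (if l = 0 then 1 else 0)
      else \<mu>^i * fact (i - 1 + l) / (fact (i - 1) * (2*\<mu>)^(i + l)))"

lemma psiL_measurable[measurable]: "psiL \<mu> l \<in> borel_measurable borel"
  unfolding psiL_def by measurable

lemma psiL_bound: "0 < \<mu> \<Longrightarrow> \<bar>psiL \<mu> l y\<bar> \<le> fact l / \<mu>^l"
  unfolding psiL_def using pow_exp_bound[of "max 0 y" \<mu> l] by (simp add: abs_mult)

lemma psiL_nonneg_eq: "0 \<le> y \<Longrightarrow> psiL \<mu> l y = y^l * exp (- \<mu> * y)"
  by (simp add: psiL_def)

lemma Emix_psiL:
  assumes \<mu>: "0 < \<mu>"
  shows "Emix \<mu> i (psiL \<mu> l) = cmom \<mu> i l"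
proof (cases "i = 0")
  case True
  then show ?thesis by (simp add: Emix_def cmom_def psiL_def)
next
  case False
  then obtain k where i: "i = Suc k" by (cases i) auto
  define c where "c = \<mu>^(Suc k) * fact (k + l) / (fact k * (2*\<mu>)^(Suc (k + l)))"
  have pw: "erlang_density k \<mu> y * psiL \<mu> l y = c * erlang_density (k + l) (2*\<mu>) y" for y
  proof (cases "y < 0")
    case True
    then show ?thesis by (simp add: erlang_density_def)
  next
    case False
    have e: "exp (- \<mu> * y) * exp (- \<mu> * y) = exp (- (2 * \<mu>) * y)"
      by (simp add: exp_add[symmetric])
    have "erlang_density k \<mu> y * psiL \<mu> l y
        = \<mu>^(Suc k) / fact k * y^(k+l) * (exp (- \<mu> * y) * exp (- \<mu> * y))"
      using False by (simp add: erlang_density_def psiL_def power_add)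
    also have "\<dots> = c * erlang_density (k + l) (2*\<mu>) y"
      unfolding e c_def using False \<mu>
      by (simp add: erlang_density_def field_simps)
    finally show ?thesis .
  qed
  have "Emix \<mu> i (psiL \<mu> l) = (LINT y|lborel. c * erlang_density (k + l) (2*\<mu>) y)"
    using i by (simp add: Emix_def pw)
  also have "\<dots> = c" using \<mu> by simp
  also have "\<dots> = cmom \<mu> i l" by (simp add: c_def cmom_def i)
  finally show ?thesis .
qed

lemma Emix_one: "0 < \<mu> \<Longrightarrow> Emix \<mu> i (\<lambda>_. 1) = 1"
  by (simp add: Emix_def)

lemma Emix_ind:
  assumes \<mu>: "0 < \<mu>" and x: "0 \<le> x"
  shows "Emix \<mu> i (\<lambda>y. if y \<le> x then 1 else 0) = G \<mu> i x"
proof (cases "i = 0")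
  case True
  then show ?thesis using x by (simp add: Emix_def G_def)
next
  case False
  have "has_bochner_integral lborel (\<lambda>y. erlang_density (i - 1) \<mu> y * (if y \<le> x then 1 else 0)) (erlang_CDF (i - 1) \<mu> x)"
  proof (rule has_bochner_integral_nn_integral)
    show "(\<integral>\<^sup>+ y. ennreal (erlang_density (i - 1) \<mu> y * (if y \<le> x then 1 else 0)) \<partial>lborel) = ennreal (erlang_CDF (i - 1) \<mu> x)"
    proof -
      have "(\<integral>\<^sup>+ y. ennreal (erlang_density (i - 1) \<mu> y * (if y \<le> x then 1 else 0)) \<partial>lborel)
          = (\<integral>\<^sup>+ y. ennreal (erlang_density (i - 1) \<mu> y) * indicator {..x} y \<partial>lborel)"
        by (intro nn_integral_cong) (auto simp: indicator_def)
      also have "\<dots> = ennreal (erlang_CDF (i - 1) \<mu> x)" by (rule nn_integral_erlang_density[OF \<mu>])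
      finally show ?thesis .
    qed
    show "0 \<le> erlang_CDF (i - 1) \<mu> x" using \<mu> by simp
    show "AE y in lborel. 0 \<le> erlang_density (i - 1) \<mu> y * (if y \<le> x then 1 else 0)" using \<mu> by simp
  qed simp
  then show ?thesis using False by (simp add: Emix_def G_def has_bochner_integral_iff)
qed

lemma qq_bound:
  assumes "0 < \<mu>" "0 \<le> t"
  shows "0 \<le> qq m \<mu> k t" "qq m \<mu> k t \<le> 1"
proof -
  show "0 \<le> qq m \<mu> k t" using assms by (simp add: qq_def)
  have "(\<mu> * t) ^ (m - k) / fact (m - k) \<le> exp (\<mu> * t)"
    using assms by (intro pow_div_fact_le_exp) auto
  hence "exp (- \<mu> * t) * ((\<mu> * t) ^ (m - k) / fact (m - k)) \<le> exp (- \<mu> * t) * exp (\<mu> * t)"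
    by (intro mult_left_mono) auto
  thus "qq m \<mu> k t \<le> 1" by (simp add: qq_def exp_minus field_simps)
qed

lemma qq_measurable[measurable]: "qq m \<mu> k \<in> borel_measurable borel"
  unfolding qq_def by measurable

lemma qq_expand:
  fixes a y :: real
  shows "qq m \<mu> k (a + y) = (\<Sum>l\<le>m - k. \<mu>^(m-k) / (fact l * fact (m - k - l)) *
            (a^(m - k - l) * exp (- \<mu> * a)) * (y^l * exp (- \<mu> * y)))"
proof -
  define d where "d = m - k"
  have "qq m \<mu> k (a + y) = exp (- \<mu> * a) * exp (- \<mu> * y) * \<mu>^d * (y + a)^d / fact d"
  proof -
    have p: "(\<mu> * (a + y))^d = \<mu>^d * (y+a)^d" by (simp add: power_mult_distrib add.commute)
    have e: "exp (- \<mu> * (a + y)) = exp (- \<mu> * a) * exp (- \<mu> * y)"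
      by (simp add: exp_add[symmetric] algebra_simps)
    show ?thesis unfolding qq_def d_def[symmetric] p e by simp
  qed
  also have "\<dots> = (\<Sum>l\<le>d. exp (- \<mu> * a) * exp (- \<mu> * y) * \<mu>^d * (real (d choose l) * y^l * a^(d-l)) / fact d)"
    by (simp add: binomial_ring sum_distrib_left sum_divide_distrib)
  also have "\<dots> = (\<Sum>l\<le>d. \<mu>^d / (fact l * fact (d - l)) * (a^(d - l) * exp (- \<mu> * a)) * (y^l * exp (- \<mu> * y)))"
  proof (rule sum.cong[OF refl])
    fix l assume "l \<in> {..d}"
    hence "l \<le> d" by simp
    hence c: "real (d choose l) = fact d / (fact l * fact (d - l))" by (simp add: binomial_fact)
    show "exp (- \<mu> * a) * exp (- \<mu> * y) * \<mu>^d * (real (d choose l) * y^l * a^(d-l)) / fact d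
        = \<mu>^d / (fact l * fact (d - l)) * (a^(d - l) * exp (- \<mu> * a)) * (y^l * exp (- \<mu> * y))"
      unfolding c by (simp add: field_simps)
  qed
  finally show ?thesis by (simp add: d_def)
qed



lemma alg_abs:
  fixes P \<sigma> \<tau> A F1 F2 F3 F4 u c w :: real
  assumes nz: "F2 \<noteq> 0" "F3 \<noteq> 0" "F4 \<noteq> 0" "u \<noteq> 0" "c \<noteq> 0" "w \<noteq> 0" and t: "\<tau> * \<tau> = 1"
  shows "P / (F3 * F4) * (\<sigma> * A) * (u * F1 / (F2 * (c * u * w)))
       = (\<sigma> * \<tau> * P) / c * (F1 / (F2 * F3) * (A / F4) * (\<tau> / w))"
proof -
  have "(\<sigma> * \<tau> * P) / c * (F1 / (F2 * F3) * (A / F4) * (\<tau> / w)) = (\<tau> * \<tau>) * (\<sigma> * P * A * F1 / (c * F2 * F3 * F4 * w))"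
    using nz by (simp add: field_simps)
  also have "\<dots> = \<sigma> * P * A * F1 / (c * F2 * F3 * F4 * w)" using t by simp
  also have "\<dots> = P / (F3 * F4) * (\<sigma> * A) * (u * F1 / (F2 * (c * u * w)))"
    using nz by (simp add: field_simps)
  finally show ?thesis by simp
qed

lemma term_eq:
  fixes \<mu> :: real and a :: "nat \<Rightarrow> real"
  assumes \<mu>: "0 < \<mu>" and l: "l \<le> d"
  shows "\<mu>^d / (fact l * fact (d - l)) * ((-1)^(d-l) * a (d-l)) * cmom \<mu> (Suc i) l
       = (-\<mu>)^d / 2^(Suc i) * (real ((Suc i + l - 1) choose (Suc i - 1)) *
            (a (d - l) / fact (d - l)) * (- 1 / (2 * \<mu>)) ^ l)"
proof -
  have c: "real ((Suc i + l - 1) choose (Suc i - 1)) = fact (i + l) / (fact i * fact l)"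
    using binomial_fact[of i "i + l"] by simp
  have s: "(-\<mu>)^d = (-1)^(d-l) * (-1)^l * \<mu>^d"
  proof -
    have "(-1::real)^d = (-1)^(d-l) * (-1)^l" using power_add[of "-1::real" "d-l" l] l by simp
    thus ?thesis by (subst power_minus) simp
  qed
  have q: "(- 1 / (2 * \<mu>)) ^ l = (-1)^l / (2 * \<mu>)^l" by (rule power_divide)
  have p2: "(2*\<mu>)^(Suc i + l) = 2^(Suc i) * \<mu>^(Suc i) * (2*\<mu>)^l"
    by (simp only: power_add power_mult_distrib)
  have cm: "cmom \<mu> (Suc i) l = \<mu>^(Suc i) * fact (i + l) / (fact i * (2^(Suc i) * \<mu>^(Suc i) * (2*\<mu>)^l))"
    unfolding cmom_def p2[symmetric] by simp
  have sq: "(-1::real)^l * (-1)^l = 1" by (simp add: power_add[symmetric])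
  show ?thesis
    unfolding c s q cm
    by (rule alg_abs) (use \<mu> sq in simp_all)
qed

lemma ppos_single:
  fixes \<mu> :: real
  assumes \<mu>: "0 < \<mu>"
  shows "(\<Sum>l\<le>N-j. \<mu>^(N-j) / (fact l * fact (N-j-l)) * ((-1)^(N-j-l) * (deriv^^(N-j-l)) \<alpha> \<mu>) * cmom \<mu> i l)
       = p_pos \<alpha> N \<mu> i j"
proof (cases i)
  case 0
  have "(\<Sum>l\<le>N-j. \<mu>^(N-j) / (fact l * fact (N-j-l)) * ((-1)^(N-j-l) * (deriv^^(N-j-l)) \<alpha> \<mu>) * cmom \<mu> i l)
      = (\<Sum>l\<le>N-j. if l = 0 then \<mu>^(N-j) / (fact l * fact (N-j-l)) * ((-1)^(N-j-l) * (deriv^^(N-j-l)) \<alpha> \<mu>) else 0)"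
    by (intro sum.cong) (auto simp: cmom_def 0)
  also have "\<dots> = \<mu>^(N-j) / fact (N-j) * ((-1)^(N-j) * (deriv^^(N-j)) \<alpha> \<mu>)"
    by (subst sum.delta) auto
  also have "\<dots> = p_pos \<alpha> N \<mu> i j"
    by (simp add: p_pos_def 0 power_minus[of \<mu>])
  finally show ?thesis .
next
  case (Suc i')
  have "(\<Sum>l\<le>N-j. \<mu>^(N-j) / (fact l * fact (N-j-l)) * ((-1)^(N-j-l) * (deriv^^(N-j-l)) \<alpha> \<mu>) * cmom \<mu> i l)
     = (\<Sum>l=0..N-j. (-\<mu>)^(N-j) / 2^(Suc i') * (real ((Suc i' + l - 1) choose (Suc i' - 1)) *
            ((deriv^^(N-j-l)) \<alpha> \<mu> / fact (N-j-l)) * (- 1 / (2 * \<mu>)) ^ l))"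
    unfolding atMost_atLeast0 Suc
    by (intro sum.cong refl term_eq[OF \<mu>, where a="\<lambda>r. (deriv^^r) \<alpha> \<mu>"]) auto
  also have "\<dots> = p_pos \<alpha> N \<mu> i j"
    by (simp add: p_pos_def Suc sum_distrib_left)
  finally show ?thesis .
qed

lemma ppos_sum:
  fixes \<mu> :: real and v :: "nat \<Rightarrow> real"
  assumes \<mu>: "0 < \<mu>"
  shows "(\<Sum>l\<le>N-j. \<mu>^(N-j) / (fact l * fact (N-j-l)) * ((-1)^(N-j-l) * (deriv^^(N-j-l)) \<alpha> \<mu>) * (\<Sum>i=0..N. v i * cmom \<mu> i l))
       = (\<Sum>i=0..N. v i * p_pos \<alpha> N \<mu> i j)"
proof -
  have "(\<Sum>l\<le>N-j. \<mu>^(N-j) / (fact l * fact (N-j-l)) * ((-1)^(N-j-l) * (deriv^^(N-j-l)) \<alpha> \<mu>) * (\<Sum>i=0..N. v i * cmom \<mu> i l))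
      = (\<Sum>i=0..N. v i * (\<Sum>l\<le>N-j. \<mu>^(N-j) / (fact l * fact (N-j-l)) * ((-1)^(N-j-l) * (deriv^^(N-j-l)) \<alpha> \<mu>) * cmom \<mu> i l))"
  proof -
    define cf where "cf = (\<lambda>l. \<mu>^(N-j) / (fact l * fact (N-j-l)) * ((-1)^(N-j-l) * (deriv^^(N-j-l)) \<alpha> \<mu>))"
    have "(\<Sum>l\<le>N-j. cf l * (\<Sum>i=0..N. v i * cmom \<mu> i l)) = (\<Sum>l\<le>N-j. \<Sum>i=0..N. v i * (cf l * cmom \<mu> i l))"
      by (intro sum.cong refl) (simp add: sum_distrib_left mult_ac)
    also have "\<dots> = (\<Sum>i=0..N. \<Sum>l\<le>N-j. v i * (cf l * cmom \<mu> i l))"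
      by (rule sum.swap)
    also have "\<dots> = (\<Sum>i=0..N. v i * (\<Sum>l\<le>N-j. cf l * cmom \<mu> i l))"
      by (simp add: sum_distrib_left)
    finally show ?thesis by (simp add: cf_def)
  qed
  also have "\<dots> = (\<Sum>i=0..N. v i * p_pos \<alpha> N \<mu> i j)"
    by (simp only: ppos_single[OF \<mu>])
  finally show ?thesis .
qed

lemma varpi2_single:
  fixes \<mu> w :: real
  shows "(\<Sum>l\<le>N-j. \<mu>^(N-j) / (fact l * fact (N-j-l)) * ((-1)^(N-j-l) * (deriv^^(N-j-l)) \<alpha> \<mu>) * (w^l * exp (- \<mu> * w)))
       = varpi2_pos \<alpha> N \<mu> w j"
proof -
  have "(\<Sum>l\<le>N-j. \<mu>^(N-j) / (fact l * fact (N-j-l)) * ((-1)^(N-j-l) * (deriv^^(N-j-l)) \<alpha> \<mu>) * (w^l * exp (- \<mu> * w)))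
      = (\<Sum>l=0..N-j. (-\<mu>)^(N-j) * exp (- \<mu> * w) * (((- w) ^ l / fact l) * ((deriv ^^ (N - j - l)) \<alpha> \<mu> / fact (N - j - l))))"
    unfolding atMost_atLeast0
  proof (intro sum.cong refl)
    fix l assume "l \<in> {0..N-j}"
    hence l: "l \<le> N - j" by simp
    have s: "(-\<mu>)^(N-j) * (-w)^l = (-1)^(N-j-l) * \<mu>^(N-j) * w^l"
    proof -
      have nn: "N - j = (N-j-l) + l" using l by simp
      have "(-1::real)^(N-j) = (-1)^(N-j-l) * (-1)^l"
        by (subst nn) (rule power_add)
      hence "(-1::real)^(N-j) * (-1)^l = (-1)^(N-j-l) * ((-1)^l * (-1)^l)" by simp
      also have "\<dots> = (-1)^(N-j-l)" by (simp add: power_add[symmetric])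
      finally have "(-1::real)^(N-j) * (-1)^l = (-1)^(N-j-l)" .
      thus ?thesis by (simp add: power_minus[of \<mu>] power_minus[of w] mult_ac)
    qed
    show "\<mu>^(N-j) / (fact l * fact (N-j-l)) * ((-1)^(N-j-l) * (deriv^^(N-j-l)) \<alpha> \<mu>) * (w^l * exp (- \<mu> * w))
        = (-\<mu>)^(N-j) * exp (- \<mu> * w) * (((- w) ^ l / fact l) * ((deriv ^^ (N - j - l)) \<alpha> \<mu> / fact (N - j - l)))"
    proof -
      have "(-\<mu>)^(N-j) * exp (- \<mu> * w) * (((- w) ^ l / fact l) * ((deriv ^^ (N - j - l)) \<alpha> \<mu> / fact (N - j - l)))
          = ((-\<mu>)^(N-j) * (- w) ^ l) * exp (- \<mu> * w) * (deriv ^^ (N - j - l)) \<alpha> \<mu> / (fact l * fact (N - j - l))"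
        by (simp add: field_simps)
      also have "\<dots> = \<mu>^(N-j) / (fact l * fact (N-j-l)) * ((-1)^(N-j-l) * (deriv^^(N-j-l)) \<alpha> \<mu>) * (w^l * exp (- \<mu> * w))"
        using s by (simp add: divide_inverse mult_ac)
      finally show ?thesis by (rule sym)
    qed
  qed
  also have "\<dots> = varpi2_pos \<alpha> N \<mu> w j"
    by (simp add: varpi2_pos_def sum_distrib_left)
  finally show ?thesis .
qed



context prob_space begin

lemma step:
  fixes Bv T :: "'a \<Rightarrow> real" and \<psi> :: "real \<Rightarrow> real"
  assumes \<mu>: "0 < \<mu>" and Bd: "distributed M lborel Bv (erlang_density m \<mu>)"
    and T[measurable]: "T \<in> borel_measurable M" and T0: "AE \<omega> in M. 0 \<le> T \<omega>"
    and ind: "indep_var borel Bv borel T"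
    and \<psi>m[measurable]: "\<psi> \<in> borel_measurable borel" and C: "\<And>y. \<bar>\<psi> y\<bar> \<le> C"
  shows "(\<integral>\<omega>. \<psi> (max 0 (Bv \<omega> - T \<omega>)) \<partial>M)
       = (\<Sum>k\<le>m. (\<integral>\<omega>. qq m \<mu> k (T \<omega>) \<partial>M) * (Emix \<mu> (Suc k) \<psi> - \<psi> 0)) + \<psi> 0"
proof -
  have Bm[measurable]: "Bv \<in> borel_measurable M"
    using distributed_measurable[OF Bd] by simp
  define PB where "PB = distr M borel Bv"
  define PT where "PT = distr M borel T"
  interpret PB: prob_space PB unfolding PB_def by (rule prob_space_distr) simp
  interpret PT: prob_space PT unfolding PT_def by (rule prob_space_distr) simp
  interpret P: pair_prob_space PB PT ..
  have joint: "distr M (borel \<Otimes>\<^sub>M borel) (\<lambda>\<omega>. (Bv \<omega>, T \<omega>)) = PB \<Otimes>\<^sub>M PT"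
    using ind unfolding indep_var_distribution_eq PB_def PT_def by simp
  have PBd: "PB = density lborel (erlang_density m \<mu>)"
  proof -
    have "PB = distr M lborel Bv" unfolding PB_def by (rule distr_cong) auto
    also have "\<dots> = density lborel (erlang_density m \<mu>)" by (rule distributed_distr_eq_density[OF Bd])
    finally show ?thesis .
  qed
  have sPB[simp]: "sets PB = sets borel" "space PB = UNIV" unfolding PB_def by auto
  have sPT[simp]: "sets PT = sets borel" "space PT = UNIV" unfolding PT_def by auto
  define f where "f = (\<lambda>b t. \<psi> (max 0 (b - t)))"
  have fm[measurable]: "case_prod f \<in> borel_measurable (PB \<Otimes>\<^sub>M PT)"
    unfolding f_def by (simp add: measurable_cong_sets[OF sets_pair_measure_cong[OF sPB(1) sPT(1)] refl])
  have fint: "integrable (PB \<Otimes>\<^sub>M PT) (case_prod f)"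
  proof (rule P.integrable_const_bound[where B=C])
    show "AE x in PB \<Otimes>\<^sub>M PT. norm (case_prod f x) \<le> C" by (auto simp: f_def C)
  qed (rule fm)
  have "(\<integral>\<omega>. \<psi> (max 0 (Bv \<omega> - T \<omega>)) \<partial>M) = integral\<^sup>L (PB \<Otimes>\<^sub>M PT) (case_prod f)"
    unfolding joint[symmetric]
    by (subst integral_distr) (auto simp: f_def)
  also have "\<dots> = (\<integral>t. (\<integral>b. f b t \<partial>PB) \<partial>PT)"
    by (rule P.integral_snd[OF fint, symmetric])
  also have "\<dots> = (\<integral>t. (\<Sum>k\<le>m. qq m \<mu> k t * (Emix \<mu> (Suc k) \<psi> - \<psi> 0)) + \<psi> 0 \<partial>PT)"
  proof (rule integral_cong_AE)
    show "(\<lambda>t. \<integral>b. f b t \<partial>PB) \<in> borel_measurable PT"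
      using P.integrable_snd[OF fint] by (rule borel_measurable_integrable)
    show "(\<lambda>t. (\<Sum>k\<le>m. qq m \<mu> k t * (Emix \<mu> (Suc k) \<psi> - \<psi> 0)) + \<psi> 0) \<in> borel_measurable PT"
      by (simp add: measurable_cong_sets[OF sPT(1) refl])
    have "AE t in PT. 0 \<le> t" unfolding PT_def using T0 by (subst AE_distr_iff) auto
    then show "AE t in PT. (\<integral>b. f b t \<partial>PB) = (\<Sum>k\<le>m. qq m \<mu> k t * (Emix \<mu> (Suc k) \<psi> - \<psi> 0)) + \<psi> 0"
    proof eventually_elim
      case (elim t)
      have "(\<integral>b. f b t \<partial>PB) = (LINT b|lborel. erlang_density m \<mu> b * \<psi> (max 0 (b - t)))"
        unfolding PBd f_def using \<mu> by (subst integral_density) auto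
      also have "\<dots> = (\<Sum>k\<le>m. qq m \<mu> k t * (LINT y|lborel. erlang_density k \<mu> y * \<psi> y))
         + (1 - (\<Sum>k\<le>m. qq m \<mu> k t)) * \<psi> 0"
        by (rule memoryless[OF \<mu> elim \<psi>m C])
      also have "\<dots> = (\<Sum>k\<le>m. qq m \<mu> k t * (Emix \<mu> (Suc k) \<psi> - \<psi> 0)) + \<psi> 0"
        by (simp add: Emix_def algebra_simps sum_subtractf sum_distrib_right sum_distrib_left)
      finally show ?case .
    qed
  qed
  also have "\<dots> = (\<integral>\<omega>. (\<Sum>k\<le>m. qq m \<mu> k (T \<omega>) * (Emix \<mu> (Suc k) \<psi> - \<psi> 0)) + \<psi> 0 \<partial>M)"
    unfolding PT_def by (subst integral_distr) auto
  also have "\<dots> = (\<Sum>k\<le>m. (\<integral>\<omega>. qq m \<mu> k (T \<omega>) \<partial>M) * (Emix \<mu> (Suc k) \<psi> - \<psi> 0)) + \<psi> 0"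
  proof -
    have qi: "integrable M (\<lambda>\<omega>. qq m \<mu> k (T \<omega>))" for k
    proof (rule integrable_const_bound[where B=1])
      show "AE x in M. norm (qq m \<mu> k (T x)) \<le> 1"
        using T0 by eventually_elim (use qq_bound[OF \<mu>] in auto)
    qed simp
    have qi2: "integrable M (\<lambda>\<omega>. qq m \<mu> k (T \<omega>) * (Emix \<mu> (Suc k) \<psi> - \<psi> 0))" for k
      using qi by (rule integrable_mult_left)
    have "(\<integral>\<omega>. (\<Sum>k\<le>m. qq m \<mu> k (T \<omega>) * (Emix \<mu> (Suc k) \<psi> - \<psi> 0)) + \<psi> 0 \<partial>M)
        = (\<integral>\<omega>. (\<Sum>k\<le>m. qq m \<mu> k (T \<omega>) * (Emix \<mu> (Suc k) \<psi> - \<psi> 0)) \<partial>M) + \<psi> 0"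
      by (subst Bochner_Integration.integral_add) (auto intro!: Bochner_Integration.integrable_sum qi2 simp: prob_space)
    also have "(\<integral>\<omega>. (\<Sum>k\<le>m. qq m \<mu> k (T \<omega>) * (Emix \<mu> (Suc k) \<psi> - \<psi> 0)) \<partial>M)
        = (\<Sum>k\<le>m. (\<integral>\<omega>. qq m \<mu> k (T \<omega>) * (Emix \<mu> (Suc k) \<psi> - \<psi> 0) \<partial>M))"
      by (rule Bochner_Integration.integral_sum) (rule qi2)
    finally show ?thesis by simp
  qed
  finally show ?thesis .
qed

end



context prob_space begin

lemma qq_indep:
  fixes X Y :: "'a \<Rightarrow> real"
  assumes \<mu>: "0 < \<mu>" and X[measurable]: "X \<in> borel_measurable M" and X0: "AE \<omega> in M. 0 \<le> X \<omega>"
    and Y[measurable]: "Y \<in> borel_measurable M" and Y0: "AE \<omega> in M. 0 \<le> Y \<omega>"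
    and ind: "indep_var borel X borel Y"
  shows "(\<integral>\<omega>. qq m \<mu> k (X \<omega> + Y \<omega>) \<partial>M)
       = (\<Sum>l\<le>m-k. \<mu>^(m-k) / (fact l * fact (m-k-l)) * (\<integral>\<omega>. X \<omega>^(m-k-l) * exp (-\<mu> * X \<omega>) \<partial>M)
            * (\<integral>\<omega>. psiL \<mu> l (Y \<omega>) \<partial>M))"
proof -
  have iX: "integrable M (\<lambda>\<omega>. X \<omega>^r * exp (-\<mu> * X \<omega>))" for r
  proof (rule integrable_const_bound[where B="fact r / \<mu>^r"])
    show "AE x in M. norm (X x^r * exp (-\<mu> * X x)) \<le> fact r / \<mu>^r"
      using X0 by eventually_elim (use pow_exp_bound[OF _ \<mu>] in auto)
  qed simp
  have iY: "integrable M (\<lambda>\<omega>. psiL \<mu> l (Y \<omega>))" for l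
  proof (rule integrable_const_bound[where B="fact l / \<mu>^l"])
    show "AE x in M. norm (psiL \<mu> l (Y x)) \<le> fact l / \<mu>^l"
      using psiL_bound[OF \<mu>] by simp
  qed simp
  have indl: "indep_var borel (\<lambda>\<omega>. X \<omega>^r * exp (-\<mu> * X \<omega>)) borel (\<lambda>\<omega>. psiL \<mu> l (Y \<omega>))" for r l
    using indep_var_compose[OF ind, of "\<lambda>x. x^r * exp (-\<mu> * x)" borel "psiL \<mu> l" borel]
    by (simp add: comp_def)
  have "(\<integral>\<omega>. qq m \<mu> k (X \<omega> + Y \<omega>) \<partial>M)
      = (\<integral>\<omega>. (\<Sum>l\<le>m-k. \<mu>^(m-k) / (fact l * fact (m-k-l)) * ((X \<omega>^(m-k-l) * exp (-\<mu> * X \<omega>)) * psiL \<mu> l (Y \<omega>))) \<partial>M)"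
  proof (rule integral_cong_AE)
    show "AE \<omega> in M. qq m \<mu> k (X \<omega> + Y \<omega>) = (\<Sum>l\<le>m-k. \<mu>^(m-k) / (fact l * fact (m-k-l)) * ((X \<omega>^(m-k-l) * exp (-\<mu> * X \<omega>)) * psiL \<mu> l (Y \<omega>)))"
      using Y0
    proof eventually_elim
      case (elim \<omega>)
      show ?case unfolding qq_expand using elim by (simp add: psiL_nonneg_eq mult_ac)
    qed
  qed simp_all
  also have "\<dots> = (\<Sum>l\<le>m-k. (\<integral>\<omega>. \<mu>^(m-k) / (fact l * fact (m-k-l)) * ((X \<omega>^(m-k-l) * exp (-\<mu> * X \<omega>)) * psiL \<mu> l (Y \<omega>)) \<partial>M))"
  proof (rule Bochner_Integration.integral_sum)
    fix l
    show "integrable M (\<lambda>\<omega>. \<mu>^(m-k) / (fact l * fact (m-k-l)) * ((X \<omega>^(m-k-l) * exp (-\<mu> * X \<omega>)) * psiL \<mu> l (Y \<omega>)))"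
      by (rule integrable_mult_right, rule indep_var_integrable[OF indl iX iY])
  qed
  also have "\<dots> = (\<Sum>l\<le>m-k. \<mu>^(m-k) / (fact l * fact (m-k-l)) * (\<integral>\<omega>. (X \<omega>^(m-k-l) * exp (-\<mu> * X \<omega>)) * psiL \<mu> l (Y \<omega>) \<partial>M))"
    by simp
  also have "\<dots> = (\<Sum>l\<le>m-k. \<mu>^(m-k) / (fact l * fact (m-k-l)) * (\<integral>\<omega>. X \<omega>^(m-k-l) * exp (-\<mu> * X \<omega>) \<partial>M)
            * (\<integral>\<omega>. psiL \<mu> l (Y \<omega>) \<partial>M))"
    by (intro sum.cong refl) (subst indep_var_lebesgue_integral[OF indl iX iY], simp only: mult.assoc)
  finally show ?thesis .
qed

lemma A_moment:
  fixes X A1 :: "'a \<Rightarrow> real"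
  assumes \<mu>: "0 < \<mu>" and X[measurable]: "X \<in> borel_measurable M"
    and A1[measurable]: "A1 \<in> borel_measurable M" and A10: "AE \<omega> in M. 0 \<le> A1 \<omega>"
    and d: "distr M borel X = distr M borel A1"
  shows "(\<integral>\<omega>. X \<omega>^r * exp (-\<mu> * X \<omega>) \<partial>M) = (-1)^r * (deriv ^^ r) (\<lambda>s. \<integral>x. exp (-s * A1 x) \<partial>M) \<mu>"
proof -
  have "(\<integral>\<omega>. X \<omega>^r * exp (-\<mu> * X \<omega>) \<partial>M) = (\<integral>x. x^r * exp (-\<mu> * x) \<partial>distr M borel X)"
    by (subst integral_distr) auto
  also have "\<dots> = (\<integral>x. x^r * exp (-\<mu> * x) \<partial>distr M borel A1)" by (simp only: d)
  also have "\<dots> = (\<integral>\<omega>. A1 \<omega>^r * exp (-\<mu> * A1 \<omega>) \<partial>M)"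
    by (subst integral_distr) auto
  also have "\<dots> = (\<integral>\<omega>. (-1)^r * ((- A1 \<omega>)^r * exp (-\<mu> * A1 \<omega>)) \<partial>M)"
  proof (intro Bochner_Integration.integral_cong refl)
    fix \<omega>
    have "(-1::real)^r * (-1)^r = 1" by (simp add: power_add[symmetric])
    then show "A1 \<omega>^r * exp (-\<mu> * A1 \<omega>) = (-1)^r * ((- A1 \<omega>)^r * exp (-\<mu> * A1 \<omega>))"
      by (simp add: power_minus[of "A1 \<omega>"] mult.assoc[symmetric])
  qed
  also have "\<dots> = (-1)^r * (\<integral>\<omega>. (- A1 \<omega>)^r * exp (-\<mu> * A1 \<omega>) \<partial>M)" by simp
  also have "\<dots> = (-1)^r * (deriv ^^ r) (\<lambda>s. \<integral>x. exp (-s * A1 x) \<partial>M) \<mu>"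
    by (simp only: laplace_deriv_iter[OF A1 A10 \<mu>])
  finally show ?thesis .
qed

end



fun Wf :: "real \<Rightarrow> nat \<Rightarrow> (nat + nat \<Rightarrow> real) \<Rightarrow> real" where
  "Wf w 0 f = w"
| "Wf w (Suc 0) f = w"
| "Wf w (Suc (Suc n)) f = max 0 (f (Inr (Suc (Suc n))) - f (Inl (Suc n)) - Wf w (Suc n) f)"

definition Jn :: "nat \<Rightarrow> (nat + nat) set" where
  "Jn n = Inl ` {1..<n} \<union> Inr ` {2..n}"

lemma Jn_mono: "Jn (Suc n) \<subseteq> Jn (Suc (Suc n))"
  by (auto simp: Jn_def)

lemma Jn_mem: "Inr (Suc (Suc n)) \<in> Jn (Suc (Suc n))" "Inl (Suc n) \<in> Jn (Suc (Suc n))"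
  by (auto simp: Jn_def)

lemma Wf_cong: "(\<And>i. i \<in> Jn n \<Longrightarrow> f i = g i) \<Longrightarrow> Wf w n f = Wf w n g"
proof (induction w n f rule: Wf.induct)
  case (3 w n f)
  have "Wf w (Suc n) f = Wf w (Suc n) g" using 3 Jn_mono by (intro "3.IH") auto
  moreover have "f (Inr (Suc (Suc n))) = g (Inr (Suc (Suc n)))" "f (Inl (Suc n)) = g (Inl (Suc n))"
    using 3(2) Jn_mem by auto
  ultimately show ?case by simp
qed auto

lemma Wf_const: "Wf w 0 = (\<lambda>_. w)" "Wf w (Suc 0) = (\<lambda>_. w)"
  by (rule ext, simp)+

lemma Wf_meas: "Jn n \<subseteq> J \<Longrightarrow> Wf w n \<in> borel_measurable (PiM J (\<lambda>_. borel))"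
proof (induction w n "undefined :: nat + nat \<Rightarrow> real" arbitrary: rule: Wf.induct)
  case (3 w n)
  have m: "Wf w (Suc n) \<in> borel_measurable (PiM J (\<lambda>_. borel))" using 3 Jn_mono by auto
  have i1: "Inr (Suc (Suc n)) \<in> J" and i2: "Inl (Suc n) \<in> J" using 3(2) Jn_mem by auto
  have c1: "(\<lambda>f. f (Inr (Suc (Suc n)))) \<in> borel_measurable (PiM J (\<lambda>_. borel :: real measure))"
    using measurable_component_singleton[OF i1, of "\<lambda>_. borel"] by simp
  have c2: "(\<lambda>f. f (Inl (Suc n))) \<in> borel_measurable (PiM J (\<lambda>_. borel :: real measure))"
    using measurable_component_singleton[OF i2, of "\<lambda>_. borel"] by simp
  have "(\<lambda>f. max 0 (f (Inr (Suc (Suc n))) - f (Inl (Suc n)) - Wf w (Suc n) f)) \<in> borel_measurable (PiM J (\<lambda>_. borel))"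
    using c1 c2 m by measurable
  moreover have "Wf w (Suc (Suc n)) = (\<lambda>f. max 0 (f (Inr (Suc (Suc n))) - f (Inl (Suc n)) - Wf w (Suc n) f))"
    by (rule ext) simp
  ultimately show ?case by simp
qed (simp_all add: Wf_const)



lemma reindex:
  fixes r E :: "nat \<Rightarrow> real"
  assumes N: "1 \<le> N"
  shows "(\<Sum>k\<le>N-1. r (Suc k) * (E (Suc k) - E 0)) + E 0
       = (\<Sum>i=0..N. (if i = 0 then 1 - (\<Sum>j=1..N. r j) else r i) * E i)"
proof -
  have e1: "(\<Sum>k\<le>N-1. r (Suc k) * (E (Suc k) - E 0)) = (\<Sum>j=1..N. r j * (E j - E 0))"
  proof -
    have "(\<Sum>j=Suc 0..Suc (N-1). r j * (E j - E 0)) = (\<Sum>k=0..N-1. r (Suc k) * (E (Suc k) - E 0))"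
      by (rule sum.shift_bounds_cl_Suc_ivl)
    thus ?thesis using N by (simp add: atMost_atLeast0)
  qed
  have e2: "(\<Sum>j=1..N. r j * (E j - E 0)) = (\<Sum>j=1..N. r j * E j) - (\<Sum>j=1..N. r j) * E 0"
    by (simp add: right_diff_distrib sum_subtractf sum_distrib_right)
  have e3: "(\<Sum>i=0..N. (if i = 0 then 1 - (\<Sum>j=1..N. r j) else r i) * E i)
      = (1 - (\<Sum>j=1..N. r j)) * E 0 + (\<Sum>j=1..N. r j * E j)"
  proof -
    have "(\<Sum>i=0..N. (if i = 0 then 1 - (\<Sum>j=1..N. r j) else r i) * E i)
      = (1 - (\<Sum>j=1..N. r j)) * E 0 + (\<Sum>i=Suc 0..N. (if i = 0 then 1 - (\<Sum>j=1..N. r j) else r i) * E i)"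
      by (subst sum.atLeast_Suc_atMost) auto
    also have "(\<Sum>i=Suc 0..N. (if i = 0 then 1 - (\<Sum>j=1..N. r j) else r i) * E i) = (\<Sum>j=1..N. r j * E j)"
      by (intro sum.cong) auto
    finally show ?thesis .
  qed
  show ?thesis unfolding e1 e2 e3 by (simp add: algebra_simps)
qed

context prob_space begin

lemma indep_pieces:
  fixes A B :: "nat \<Rightarrow> 'a \<Rightarrow> real"
  assumes indep: "indep_vars (\<lambda>_. borel) (case_sum A B) (Inl ` {1..} \<union> Inr ` {1..})"
    and n: "1 \<le> n"
  shows "indep_var borel (B (Suc n)) borel (\<lambda>\<omega>. A n \<omega> + Wf w n (\<lambda>i. case_sum A B i \<omega>))"
    and "indep_var borel (A n) borel (\<lambda>\<omega>. Wf w n (\<lambda>i. case_sum A B i \<omega>))"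
proof -
  let ?I = "Inl ` {1..} \<union> Inr ` {1..} :: (nat + nat) set"
  have JnI: "Jn n \<subseteq> ?I" by (auto simp: Jn_def)
  let ?K2 = "insert (Inl n) (Jn n)"
  have "indep_var (PiM {Inr (Suc n)} (\<lambda>_. borel)) (\<lambda>\<omega>. restrict (\<lambda>i. case_sum A B i \<omega>) {Inr (Suc n)})
                  (PiM ?K2 (\<lambda>_. borel)) (\<lambda>\<omega>. restrict (\<lambda>i. case_sum A B i \<omega>) ?K2)"
    by (rule indep_var_restrict[OF indep]) (use n JnI in \<open>auto simp: Jn_def\<close>)
  hence "indep_var borel ((\<lambda>f. f (Inr (Suc n))) \<circ> (\<lambda>\<omega>. restrict (\<lambda>i. case_sum A B i \<omega>) {Inr (Suc n)}))
                   borel ((\<lambda>f. f (Inl n) + Wf w n f) \<circ> (\<lambda>\<omega>. restrict (\<lambda>i. case_sum A B i \<omega>) ?K2))"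
  proof (rule indep_var_compose)
    show "(\<lambda>f. f (Inr (Suc n))) \<in> borel_measurable (PiM {Inr (Suc n)} (\<lambda>_. borel))"
      using measurable_component_singleton[of "Inr (Suc n)" "{Inr (Suc n)}" "\<lambda>_. borel :: real measure"] by simp
    have c: "(\<lambda>f. f (Inl n)) \<in> borel_measurable (PiM ?K2 (\<lambda>_. borel :: real measure))"
      using measurable_component_singleton[of "Inl n" ?K2 "\<lambda>_. borel :: real measure"] by simp
    have m: "Wf w n \<in> borel_measurable (PiM ?K2 (\<lambda>_. borel))" by (rule Wf_meas) auto
    show "(\<lambda>f. f (Inl n) + Wf w n f) \<in> borel_measurable (PiM ?K2 (\<lambda>_. borel))"
      using c m by measurable
  qed
  moreover have "((\<lambda>f. f (Inr (Suc n))) \<circ> (\<lambda>\<omega>. restrict (\<lambda>i. case_sum A B i \<omega>) {Inr (Suc n)})) = B (Suc n)"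
    by (rule ext) simp
  moreover have "((\<lambda>f. f (Inl n) + Wf w n f) \<circ> (\<lambda>\<omega>. restrict (\<lambda>i. case_sum A B i \<omega>) ?K2))
      = (\<lambda>\<omega>. A n \<omega> + Wf w n (\<lambda>i. case_sum A B i \<omega>))"
  proof (rule ext)
    fix \<omega>
    have "Wf w n (restrict (\<lambda>i. case_sum A B i \<omega>) ?K2) = Wf w n (\<lambda>i. case_sum A B i \<omega>)"
      by (rule Wf_cong) auto
    then show "((\<lambda>f. f (Inl n) + Wf w n f) \<circ> (\<lambda>\<omega>. restrict (\<lambda>i. case_sum A B i \<omega>) ?K2)) \<omega>
      = A n \<omega> + Wf w n (\<lambda>i. case_sum A B i \<omega>)" by simp
  qed
  ultimately show "indep_var borel (B (Suc n)) borel (\<lambda>\<omega>. A n \<omega> + Wf w n (\<lambda>i. case_sum A B i \<omega>))"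
    by simp
next
  let ?I = "Inl ` {1..} \<union> Inr ` {1..} :: (nat + nat) set"
  have JnI: "Jn n \<subseteq> ?I" by (auto simp: Jn_def)
  have "indep_var (PiM {Inl n} (\<lambda>_. borel)) (\<lambda>\<omega>. restrict (\<lambda>i. case_sum A B i \<omega>) {Inl n})
                  (PiM (Jn n) (\<lambda>_. borel)) (\<lambda>\<omega>. restrict (\<lambda>i. case_sum A B i \<omega>) (Jn n))"
    by (rule indep_var_restrict[OF indep]) (use n JnI in \<open>auto simp: Jn_def\<close>)
  hence "indep_var borel ((\<lambda>f. f (Inl n)) \<circ> (\<lambda>\<omega>. restrict (\<lambda>i. case_sum A B i \<omega>) {Inl n}))
                   borel (Wf w n \<circ> (\<lambda>\<omega>. restrict (\<lambda>i. case_sum A B i \<omega>) (Jn n)))"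
  proof (rule indep_var_compose)
    show "(\<lambda>f. f (Inl n)) \<in> borel_measurable (PiM {Inl n} (\<lambda>_. borel))"
      using measurable_component_singleton[of "Inl n" "{Inl n}" "\<lambda>_. borel :: real measure"] by simp
    show "Wf w n \<in> borel_measurable (PiM (Jn n) (\<lambda>_. borel))" by (rule Wf_meas) auto
  qed
  moreover have "((\<lambda>f. f (Inl n)) \<circ> (\<lambda>\<omega>. restrict (\<lambda>i. case_sum A B i \<omega>) {Inl n})) = A n"
    by (rule ext) simp
  moreover have "(Wf w n \<circ> (\<lambda>\<omega>. restrict (\<lambda>i. case_sum A B i \<omega>) (Jn n))) = (\<lambda>\<omega>. Wf w n (\<lambda>i. case_sum A B i \<omega>))"
    by (rule ext) (simp, rule Wf_cong, simp)
  ultimately show "indep_var borel (A n) borel (\<lambda>\<omega>. Wf w n (\<lambda>i. case_sum A B i \<omega>))"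
    by simp
qed

end



theorem theorem5p1:
  fixes M :: "'a measure" and A B W :: "nat \<Rightarrow> 'a \<Rightarrow> real"
    and N :: nat and \<mu> w :: real
  assumes "prob_space M"
    and "N \<ge> 1" and "\<mu> > 0" and "w \<ge> 0"
    and A_rv: "\<And>n. n \<ge> 1 \<Longrightarrow> A n \<in> borel_measurable M"
    and A_nonneg: "\<And>n. n \<ge> 1 \<Longrightarrow> AE x in M. A n x \<ge> 0"
    and A_id: "\<And>n. n \<ge> 1 \<Longrightarrow> distr M borel (A n) = distr M borel (A 1)"
    and B_erl: "\<And>n. n \<ge> 1 \<Longrightarrow> distributed M lborel (B n) (erlang_density (N - 1) \<mu>)"
    and indep: "prob_space.indep_vars M (\<lambda>_. borel) (case_sum A B)
                  (Inl ` {1..} \<union> Inr ` {1..})"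
    and W1: "W 1 = (\<lambda>x. w)"
    and Wrec: "\<And>n. n \<ge> 1 \<Longrightarrow> W (Suc n) = (\<lambda>x. max 0 (B (Suc n) x - A n x - W n x))"
  defines "\<alpha> \<equiv> (\<lambda>s::real. \<integral>x. exp (- s * A 1 x) \<partial>M)"
  shows "\<forall>n \<ge> 2. \<forall>x \<ge> 0.
           measure M {\<omega> \<in> space M. W n \<omega> \<le> x} = (\<Sum>i = 0..N. varpi \<alpha> N \<mu> w n i * G \<mu> i x)"
proof -
  interpret prob_space M by fact
  have \<mu>: "0 < \<mu>" and N: "1 \<le> N" and w0: "0 \<le> w" using assms by auto
  have W1': "W (Suc 0) = (\<lambda>x. w)" using W1 by (simp only: One_nat_def)
  have Bm: "B n \<in> borel_measurable M" if "1 \<le> n" for n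
    using distributed_measurable[OF B_erl[OF that]] by simp
  have Weq: "W n = (\<lambda>\<omega>. Wf w n (\<lambda>i. case_sum A B i \<omega>))" if "1 \<le> n" for n
    using that
  proof (induction n rule: nat_induct_at_least)
    case base
    have "Wf w 1 f = w" for f by (simp add: One_nat_def)
    then show ?case by (simp add: W1 W1')
  next
    case (Suc n)
    then obtain n' where n': "n = Suc n'" by (cases n) auto
    show ?case unfolding Wrec[OF Suc.hyps] Suc.IH by (simp add: n')
  qed
  have W0: "0 \<le> W n \<omega>" if "1 \<le> n" for n \<omega>
    using that
  proof (induction n rule: nat_induct_at_least)
    case base
    then show ?case by (simp add: W1 W1' w0)
  next
    case (Suc n)
    then show ?case unfolding Wrec[OF Suc.hyps] by simp
  qed
  have Wm: "W n \<in> borel_measurable M" if "1 \<le> n" for n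
    using that
  proof (induction n rule: nat_induct_at_least)
    case base
    then show ?case by (simp add: W1 W1')
  next
    case (Suc n)
    have [measurable]: "B (Suc n) \<in> borel_measurable M" "A n \<in> borel_measurable M" "W n \<in> borel_measurable M"
      using Bm[of "Suc n"] A_rv[OF Suc.hyps] Suc.IH by auto
    show ?case unfolding Wrec[OF Suc.hyps] by measurable
  qed
  have ind1: "indep_var borel (B (Suc n)) borel (\<lambda>\<omega>. A n \<omega> + W n \<omega>)" if "1 \<le> n" for n
    using indep_pieces(1)[OF indep that, of w] Weq[OF that] by simp
  have ind2: "indep_var borel (A n) borel (W n)" if "1 \<le> n" for n
    using indep_pieces(2)[OF indep that, of w] Weq[OF that] by simp
  have mom: "(\<integral>\<omega>. A n \<omega>^r * exp (-\<mu> * A n \<omega>) \<partial>M) = (-1)^r * (deriv^^r) \<alpha> \<mu>" if "1 \<le> n" for n r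
    unfolding \<alpha>_def by (rule A_moment[OF \<mu> A_rv[OF that] A_rv A_nonneg A_id[OF that]]) auto
  define P where "P n \<longleftrightarrow> (\<forall>\<psi> C. \<psi> \<in> borel_measurable borel \<longrightarrow> (\<forall>y. \<bar>\<psi> y\<bar> \<le> C) \<longrightarrow>
      (\<integral>\<omega>. \<psi> (W n \<omega>) \<partial>M) = (\<Sum>i=0..N. varpi \<alpha> N \<mu> w n i * Emix \<mu> i \<psi>))" for n
  have base: "P 2"
    unfolding P_def
  proof (intro allI impI)
    fix \<psi> :: "real \<Rightarrow> real" and C :: real
    assume \<psi>m[measurable]: "\<psi> \<in> borel_measurable borel" and C: "\<forall>y. \<bar>\<psi> y\<bar> \<le> C"
    have A1m[measurable]: "A 1 \<in> borel_measurable M" using A_rv by simp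
    have s12: "Suc 1 = (2::nat)" by simp
    have W2: "W 2 = (\<lambda>x. max 0 (B 2 x - (A 1 x + w)))"
    proof -
      have "W 2 = W (Suc 1)" by (simp only: s12)
      also have "\<dots> = (\<lambda>x. max 0 (B (Suc 1) x - A 1 x - W 1 x))" by (rule Wrec) simp
      also have "\<dots> = (\<lambda>x. max 0 (B 2 x - (A 1 x + w)))" by (simp only: s12 W1 diff_diff_eq)
      finally show ?thesis .
    qed
    have ind: "indep_var borel (B 2) borel (\<lambda>\<omega>. A 1 \<omega> + w)"
      using ind1[of 1] unfolding s12 W1 by simp
    have T0: "AE \<omega> in M. 0 \<le> A 1 \<omega> + w" using A_nonneg[of 1] w0 by auto
    have qE: "(\<integral>\<omega>. qq (N-1) \<mu> k (A 1 \<omega> + w) \<partial>M) = varpi2_pos \<alpha> N \<mu> w (Suc k)" if k: "k \<le> N - 1" for k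
    proof -
      have nk: "N - 1 - k = N - Suc k" by simp
      have iA: "integrable M (\<lambda>\<omega>. A 1 \<omega>^r * exp (-\<mu> * A 1 \<omega>))" for r
      proof (rule integrable_const_bound[where B="fact r / \<mu>^r"])
        show "AE x in M. norm (A 1 x^r * exp (-\<mu> * A 1 x)) \<le> fact r / \<mu>^r"
          using A_nonneg[of 1, OF order.refl] by eventually_elim (use pow_exp_bound[OF _ \<mu>] in auto)
      qed measurable
      have "(\<integral>\<omega>. qq (N-1) \<mu> k (A 1 \<omega> + w) \<partial>M)
          = (\<integral>\<omega>. (\<Sum>l\<le>N - Suc k. (\<mu>^(N - Suc k) / (fact l * fact (N - Suc k - l)) * (w^l * exp (- \<mu> * w)))
                 * (A 1 \<omega>^(N - Suc k - l) * exp (- \<mu> * A 1 \<omega>))) \<partial>M)"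
        by (intro Bochner_Integration.integral_cong refl) (simp only: qq_expand nk mult_ac)
      also have "\<dots> = (\<Sum>l\<le>N - Suc k. (\<mu>^(N - Suc k) / (fact l * fact (N - Suc k - l)) * (w^l * exp (- \<mu> * w)))
                 * (\<integral>\<omega>. A 1 \<omega>^(N - Suc k - l) * exp (- \<mu> * A 1 \<omega>) \<partial>M))"
      proof -
        have "(\<integral>\<omega>. (\<Sum>l\<le>N - Suc k. (\<mu>^(N - Suc k) / (fact l * fact (N - Suc k - l)) * (w^l * exp (- \<mu> * w)))
                 * (A 1 \<omega>^(N - Suc k - l) * exp (- \<mu> * A 1 \<omega>))) \<partial>M)
          = (\<Sum>l\<le>N - Suc k. (\<integral>\<omega>. (\<mu>^(N - Suc k) / (fact l * fact (N - Suc k - l)) * (w^l * exp (- \<mu> * w)))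
                 * (A 1 \<omega>^(N - Suc k - l) * exp (- \<mu> * A 1 \<omega>)) \<partial>M))"
        proof (rule Bochner_Integration.integral_sum)
          fix l show "integrable M (\<lambda>\<omega>. (\<mu>^(N - Suc k) / (fact l * fact (N - Suc k - l)) * (w^l * exp (- \<mu> * w)))
                 * (A 1 \<omega>^(N - Suc k - l) * exp (- \<mu> * A 1 \<omega>)))"
            by (rule integrable_mult_right, rule iA)
        qed
        then show ?thesis by simp
      qed
      also have "\<dots> = (\<Sum>l\<le>N - Suc k. \<mu>^(N - Suc k) / (fact l * fact (N - Suc k - l)) *
              ((-1)^(N - Suc k - l) * (deriv^^(N - Suc k - l)) \<alpha> \<mu>) * (w^l * exp (- \<mu> * w)))"
        by (intro sum.cong refl) (subst mom[of 1, OF order.refl], simp only: mult_ac)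
      also have "\<dots> = varpi2_pos \<alpha> N \<mu> w (Suc k)"
        by (rule varpi2_single)
      finally show ?thesis .
    qed
    have "(\<integral>\<omega>. \<psi> (W 2 \<omega>) \<partial>M)
        = (\<Sum>k\<le>N-1. (\<integral>\<omega>. qq (N-1) \<mu> k (A 1 \<omega> + w) \<partial>M) * (Emix \<mu> (Suc k) \<psi> - \<psi> 0)) + \<psi> 0"
    proof -
      have Tm: "(\<lambda>\<omega>. A 1 \<omega> + w) \<in> borel_measurable M" by measurable
      have Bd2: "distributed M lborel (B 2) (erlang_density (N - 1) \<mu>)" by (rule B_erl) simp
      have Cy: "\<And>y. \<bar>\<psi> y\<bar> \<le> C" using C by blast
      show ?thesis unfolding W2 by (rule step[OF \<mu> Bd2 Tm T0 ind \<psi>m Cy])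
    qed
    also have "\<dots> = (\<Sum>k\<le>N-1. varpi2_pos \<alpha> N \<mu> w (Suc k) * (Emix \<mu> (Suc k) \<psi> - Emix \<mu> 0 \<psi>)) + Emix \<mu> 0 \<psi>"
    proof -
      have e0: "\<psi> 0 = Emix \<mu> 0 \<psi>" by (simp add: Emix_def)
      show ?thesis unfolding e0
        by (intro arg_cong2[where f="(+)"] refl sum.cong, subst qE, auto)
    qed
    also have "\<dots> = (\<Sum>i=0..N. (if i = 0 then 1 - (\<Sum>j=1..N. varpi2_pos \<alpha> N \<mu> w j) else varpi2_pos \<alpha> N \<mu> w i) * Emix \<mu> i \<psi>)"
      by (rule reindex[OF N])
    also have "\<dots> = (\<Sum>i=0..N. varpi \<alpha> N \<mu> w 2 i * Emix \<mu> i \<psi>)"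
      by (simp add: varpi_def varpi2_def)
    finally show "(\<integral>\<omega>. \<psi> (W 2 \<omega>) \<partial>M) = (\<Sum>i=0..N. varpi \<alpha> N \<mu> w 2 i * Emix \<mu> i \<psi>)" .
  qed
  have stepP: "P (Suc n)" if n: "2 \<le> n" and IH: "P n" for n
    unfolding P_def
  proof (intro allI impI)
    fix \<psi> :: "real \<Rightarrow> real" and C :: real
    assume \<psi>m[measurable]: "\<psi> \<in> borel_measurable borel" and C: "\<forall>y. \<bar>\<psi> y\<bar> \<le> C"
    have n1: "1 \<le> n" using n by simp
    have Anm[measurable]: "A n \<in> borel_measurable M" using A_rv[OF n1] .
    have Wnm[measurable]: "W n \<in> borel_measurable M" using Wm[OF n1] .
    have IH': "(\<integral>\<omega>. \<phi> (W n \<omega>) \<partial>M) = (\<Sum>i=0..N. varpi \<alpha> N \<mu> w n i * Emix \<mu> i \<phi>)"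
      if "\<phi> \<in> borel_measurable borel" "\<And>y. \<bar>\<phi> y\<bar> \<le> D" for \<phi> D
      using IH that unfolding P_def by blast
    have vU: "varpi \<alpha> N \<mu> w (Suc n) j = (\<Sum>i=0..N. varpi \<alpha> N \<mu> w n i * pmat \<alpha> N \<mu> i j)" for j
    proof -
      obtain n' where n': "n = Suc (Suc n')" using n by (metis add_2_eq_Suc le_Suc_ex)
      show ?thesis by (simp add: varpi_def n')
    qed
    have sumv: "(\<Sum>i=0..N. varpi \<alpha> N \<mu> w n i) = 1"
    proof -
      have "1 = (\<integral>\<omega>. (\<lambda>_. 1::real) (W n \<omega>) \<partial>M)" by (simp add: prob_space)
      also have "\<dots> = (\<Sum>i=0..N. varpi \<alpha> N \<mu> w n i * Emix \<mu> i (\<lambda>_. 1))"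
        by (rule IH'[of "\<lambda>_. 1" 1]) auto
      also have "\<dots> = (\<Sum>i=0..N. varpi \<alpha> N \<mu> w n i)" by (simp add: Emix_one[OF \<mu>])
      finally show ?thesis by simp
    qed
    have Ew: "(\<integral>\<omega>. psiL \<mu> l (W n \<omega>) \<partial>M) = (\<Sum>i=0..N. varpi \<alpha> N \<mu> w n i * cmom \<mu> i l)" for l
      using IH'[of "psiL \<mu> l" "fact l / \<mu>^l"] psiL_bound[OF \<mu>] by (simp add: Emix_psiL[OF \<mu>])
    have W0AE: "AE \<omega> in M. 0 \<le> W n \<omega>" using W0[OF n1] by simp
    have qE: "(\<integral>\<omega>. qq (N-1) \<mu> k (A n \<omega> + W n \<omega>) \<partial>M) = varpi \<alpha> N \<mu> w (Suc n) (Suc k)" for k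
    proof -
      have nk: "N - 1 - k = N - Suc k" by simp
      have "(\<integral>\<omega>. qq (N-1) \<mu> k (A n \<omega> + W n \<omega>) \<partial>M)
          = (\<Sum>l\<le>N-1-k. \<mu>^(N-1-k) / (fact l * fact (N-1-k-l)) * (\<integral>\<omega>. A n \<omega>^(N-1-k-l) * exp (-\<mu> * A n \<omega>) \<partial>M)
            * (\<integral>\<omega>. psiL \<mu> l (W n \<omega>) \<partial>M))"
        by (rule qq_indep[OF \<mu> Anm A_nonneg[OF n1] Wnm W0AE ind2[OF n1]])
      also have "\<dots> = (\<Sum>l\<le>N - Suc k. \<mu>^(N - Suc k) / (fact l * fact (N - Suc k - l)) *
            ((-1)^(N - Suc k - l) * (deriv^^(N - Suc k - l)) \<alpha> \<mu>) * (\<Sum>i=0..N. varpi \<alpha> N \<mu> w n i * cmom \<mu> i l))"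
        unfolding nk by (intro sum.cong refl) (simp only: mom[OF n1] Ew)
      also have "\<dots> = (\<Sum>i=0..N. varpi \<alpha> N \<mu> w n i * p_pos \<alpha> N \<mu> i (Suc k))"
        by (rule ppos_sum[OF \<mu>])
      also have "\<dots> = varpi \<alpha> N \<mu> w (Suc n) (Suc k)"
        by (simp add: vU pmat_def)
      finally show ?thesis .
    qed
    have v0: "varpi \<alpha> N \<mu> w (Suc n) 0 = 1 - (\<Sum>j=1..N. varpi \<alpha> N \<mu> w (Suc n) j)"
    proof -
      have "varpi \<alpha> N \<mu> w (Suc n) 0 = (\<Sum>i=0..N. varpi \<alpha> N \<mu> w n i * (1 - (\<Sum>j=1..N. p_pos \<alpha> N \<mu> i j)))"
        by (simp add: vU pmat_def)
      also have "\<dots> = (\<Sum>i=0..N. varpi \<alpha> N \<mu> w n i) - (\<Sum>i=0..N. \<Sum>j=1..N. varpi \<alpha> N \<mu> w n i * p_pos \<alpha> N \<mu> i j)"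
        by (simp add: right_diff_distrib sum_subtractf sum_distrib_left)
      also have "\<dots> = 1 - (\<Sum>j=1..N. \<Sum>i=0..N. varpi \<alpha> N \<mu> w n i * p_pos \<alpha> N \<mu> i j)"
        by (simp add: sumv sum.swap[of _ "{0..N}"])
      also have "\<dots> = 1 - (\<Sum>j=1..N. varpi \<alpha> N \<mu> w (Suc n) j)"
        by (intro arg_cong2[where f="(-)"] refl sum.cong) (auto simp: vU pmat_def)
      finally show ?thesis .
    qed
    have WS: "W (Suc n) = (\<lambda>x. max 0 (B (Suc n) x - (A n x + W n x)))"
      unfolding Wrec[OF n1] by (simp only: diff_diff_eq)
    have T0: "AE \<omega> in M. 0 \<le> A n \<omega> + W n \<omega>"
      using A_nonneg[OF n1] by eventually_elim (use W0[OF n1] in auto)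
    have "(\<integral>\<omega>. \<psi> (W (Suc n) \<omega>) \<partial>M)
        = (\<Sum>k\<le>N-1. (\<integral>\<omega>. qq (N-1) \<mu> k (A n \<omega> + W n \<omega>) \<partial>M) * (Emix \<mu> (Suc k) \<psi> - \<psi> 0)) + \<psi> 0"
    proof -
      have Tm: "(\<lambda>\<omega>. A n \<omega> + W n \<omega>) \<in> borel_measurable M" by measurable
      have Bd: "distributed M lborel (B (Suc n)) (erlang_density (N - 1) \<mu>)" by (rule B_erl) simp
      have Cy: "\<And>y. \<bar>\<psi> y\<bar> \<le> C" using C by blast
      show ?thesis unfolding WS by (rule step[OF \<mu> Bd Tm T0 ind1[OF n1] \<psi>m Cy])
    qed
    also have "\<dots> = (\<Sum>k\<le>N-1. varpi \<alpha> N \<mu> w (Suc n) (Suc k) * (Emix \<mu> (Suc k) \<psi> - Emix \<mu> 0 \<psi>)) + Emix \<mu> 0 \<psi>"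
    proof -
      have e0: "\<psi> 0 = Emix \<mu> 0 \<psi>" by (simp add: Emix_def)
      show ?thesis by (simp only: qE e0)
    qed
    also have "\<dots> = (\<Sum>i=0..N. (if i = 0 then 1 - (\<Sum>j=1..N. varpi \<alpha> N \<mu> w (Suc n) j) else varpi \<alpha> N \<mu> w (Suc n) i) * Emix \<mu> i \<psi>)"
      by (rule reindex[OF N])
    also have "\<dots> = (\<Sum>i=0..N. varpi \<alpha> N \<mu> w (Suc n) i * Emix \<mu> i \<psi>)"
      by (intro sum.cong refl) (simp add: v0)
    finally show "(\<integral>\<omega>. \<psi> (W (Suc n) \<omega>) \<partial>M) = (\<Sum>i=0..N. varpi \<alpha> N \<mu> w (Suc n) i * Emix \<mu> i \<psi>)" .
  qed
  have allP: "P n" if "2 \<le> n" for n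
    using that
  proof (induction n rule: nat_induct_at_least)
    case base then show ?case by (rule \<open>P 2\<close>)
  next
    case (Suc n) then show ?case using stepP by blast
  qed
  show ?thesis
  proof (intro allI impI)
    fix n :: nat and x :: real assume n: "2 \<le> n" and x: "0 \<le> x"
    have [measurable]: "W n \<in> borel_measurable M" using Wm n by simp
    define \<psi> where "\<psi> = (\<lambda>y::real. if y \<le> x then 1 else (0::real))"
    have \<psi>m: "\<psi> \<in> borel_measurable borel" unfolding \<psi>_def by measurable
    have \<psi>C: "\<forall>y. \<bar>\<psi> y\<bar> \<le> 1" by (simp add: \<psi>_def)
    have "measure M {\<omega> \<in> space M. W n \<omega> \<le> x} = (\<integral>\<omega>. indicator {\<omega> \<in> space M. W n \<omega> \<le> x} \<omega> \<partial>M)"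
      by (simp add: Int_absorb2)
    also have "\<dots> = (\<integral>\<omega>. \<psi> (W n \<omega>) \<partial>M)"
      by (intro Bochner_Integration.integral_cong refl) (simp add: \<psi>_def indicator_def)
    also have "\<dots> = (\<Sum>i=0..N. varpi \<alpha> N \<mu> w n i * Emix \<mu> i \<psi>)"
      using allP[OF n] \<psi>m \<psi>C unfolding P_def by blast
    also have "\<dots> = (\<Sum>i=0..N. varpi \<alpha> N \<mu> w n i * G \<mu> i x)"
      unfolding \<psi>_def by (simp add: Emix_ind[OF \<mu> x])
    finally show "measure M {\<omega> \<in> space M. W n \<omega> \<le> x} = (\<Sum>i=0..N. varpi \<alpha> N \<mu> w n i * G \<mu> i x)" .
  qed
qed


end
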